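(* Let $\alpha_1,\alpha_2,\alpha_3>0$ with $\alpha_1^{-2}=\alpha_2^{-2}+\alpha_3^{-2}$, let $a_1=-\alpha_2\alpha_3/\alpha_1$, $a_2=\alpha_3\alpha_1/\alpha_2$, $a_3=\alpha_1\alpha_2/\alpha_3$, let $\lambda>0$ with $\lambda^2=a_2^2-a_1a_3$, and let $b_1,\dots,b_5,c_1,\dots,c_5,d_1,\dots,d_6$ be real constants as in the context (eigenvector data). Let $B,B',C,C',D,D'\in\mathbb{C}$ be arbitrary. Define $w_j:\mathbb{R}\to\mathbb{C}$ by $2w_1=i\alpha_1e^{ia_1t}$, $2w_2=\alpha_2e^{ia_2t}$, $2w_3=\alpha_3e^{ia_3t}$; define $x=2\,\mathrm{Re}\big((Bb_1+Cc_1)e^{\frac i2\lambda t}\big)$, $p_1=ie^{ia_1t}\big(Bb_2e^{\frac i2\lambda t}+\bar Bb_4e^{-\frac i2\lambda t}+Dd_1e^{\frac{3i}2\lambda t}+\bar Dd_4e^{-\frac{3i}2\lambda t}\big)$, $p_2=e^{ia_2t}\big(Cc_2e^{\frac i2\lambda t}+\bar Cc_4e^{-\frac i2\lambda t}+Dd_2e^{\frac{3i}2\lambda t}+\bar Dd_5e^{-\frac{3i}2\lambda t}\big)$, $p_3=e^{ia_3t}\big((Bb_3+Cc_3)e^{\frac i2\lambda t}+(\bar Bb_5+\bar Cc_5)e^{-\frac i2\lambda t}+Dd_3e^{\frac{3i}2\lambda t}+\bar Dd_6e^{-\frac{3i}2\lambda t}\big)$, and define $y,q_1,q_2,q_3$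 by the same formulas with $B,C,D$ replaced by $B',C',D'$ (so $y$ replaces $x$, $q_j$ replaces $p_j$). Let $z:\mathbb{R}\to\mathbb{R}$ and $r_1,r_2,r_3:\mathbb{R}\to\mathbb{C}$ be any functions with $\frac{dz}{dt}=\mathrm{Im}(\bar p_1q_1-\bar p_2q_2-\bar p_3q_3)$, $\frac{dr_1}{dt}=ixp_1+iyq_1+\overline{p_2p_3}+\overline{q_2q_3}$, $\frac{dr_2}{dt}=ixp_2-iyq_2-\overline{p_3p_1}+\overline{q_3q_1}$, $\frac{dr_3}{dt}=ixq_3+iyp_3-\overline{p_1q_2}-\overline{p_2q_1}$. Then the subset of $\mathbb{R}^7=\mathbb{R}\oplus\mathbb{C}^3$ $$M=\Big\{\big(y_1y(t)-y_2x(t)+z(t),\ \tfrac12(y_1^2+y_2^2)w_1(t)+y_1p_1(t)+y_2q_1(t)+r_1(t),\ \tfrac12(y_1^2-y_2^2)w_2(t)+y_1p_2(t)-y_2q_2(t)+r_2(t),\ y_1y_2w_3(t)+y_1q_3(t)+y_2p_3(t)+r_3(t)\big):y_1,y_2,t\in\mathbb{R}\Big\}$$ is an associative 3-fold in $\mathbb{R}^7$ wherever it is nonsingular.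
   Context: Let $(x_1,\dots,x_7)$ be coordinates on $\mathbb{R}^7$ with Euclidean metric $g$, and write $dx_{ijk}=dx_i\wedge dx_j\wedge dx_k$. Define $\varphi=dx_{123}+dx_{145}+dx_{167}+dx_{246}-dx_{257}-dx_{347}-dx_{356}$. An oriented 3-dimensional (immersed) submanifold $N\subseteq\mathbb{R}^7$ is an associative 3-fold if $\varphi|_{T_xN}=\mathrm{vol}_{T_xN}$ for all $x\in N$. Identify $\mathbb{R}^7=\mathbb{R}\oplus\mathbb{C}^3$ via $(x_1,\dots,x_7)\mapsto(x_1,\,x_2+ix_3,\,x_4+ix_5,\,x_6+ix_7)$. Eigenvector data: with $T$ the real $7\times7$ matrix whose rows are $(0,-\frac{\alpha_1}{2},\frac{\alpha_2}{2},\frac{\alpha_3}{2},\frac{\alpha_1}{2},-\frac{\alpha_2}{2},-\frac{\alpha_3}{2})$, $(\alpha_1,-2a_1,0,0,0,-\alpha_3,-\alpha_2)$, $(\alpha_2,0,-2a_2,0,\alpha_3,0,\alpha_1)$, $(\alpha_3,0,0,-2a_3,\alpha_2,\alpha_1,0)$, $(-\alpha_1,0,\alpha_3,\alpha_2,2a_1,0,0)$, $(-\alpha_2,-\alpha_3,0,-\alpha_1,0,2a_2,0)$, $(-\alpha_3,-\alpha_2,-\alpha_1,0,0,0,2a_3)$, the real constants $b_j,c_j,d_j$ are such that $\mathbf{b}_\pm,\mathbf{c}_\pm,\mathbf{d}_\pm$ are nonzero and $T\mathbf{b}_\pm=\pm\lambda\mathbf{b}_\pm$, $T\mathbf{c}_\pm=\pm\lambda\mathbf{c}_\pm$,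 $T\mathbf{d}_\pm=\pm3\lambda\mathbf{d}_\pm$, where $\mathbf{b}_+=(b_1,b_2,0,b_3,b_4,0,b_5)^{\mathrm T}$, $\mathbf{b}_-=(b_1,b_4,0,b_5,b_2,0,b_3)^{\mathrm T}$, $\mathbf{c}_+=(c_1,0,c_2,c_3,0,c_4,c_5)^{\mathrm T}$, $\mathbf{c}_-=(c_1,0,c_4,c_5,0,c_2,c_3)^{\mathrm T}$, $\mathbf{d}_+=(0,d_1,\dots,d_6)^{\mathrm T}$, $\mathbf{d}_-=(0,d_4,d_5,d_6,d_1,d_2,d_3)^{\mathrm T}$. *)

theory Defs
  imports "HOL-Analysis.Analysis"
begin

definition coords :: "real \<times> complex \<times> complex \<times> complex \<Rightarrow> nat \<Rightarrow> real" where
  "coords v = (case v of (x1, z1, z2, z3) \<Rightarrow> (\<lambda>i.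
     if i = 1 then x1 else if i = 2 then Re z1 else if i = 3 then Im z1
     else if i = 4 then Re z2 else if i = 5 then Im z2
     else if i = 6 then Re z3 else if i = 7 then Im z3 else 0))"

text \<open>dx_i ^ dx_j ^ dx_k evaluated on (u,v,w) = det of the 3x3 matrix of components.\<close>
definition dx3 :: "nat \<Rightarrow> nat \<Rightarrow> nat \<Rightarrow> (nat \<Rightarrow> real) \<Rightarrow> (nat \<Rightarrow> real) \<Rightarrow> (nat \<Rightarrow> real) \<Rightarrow> real" where
  "dx3 i j k u v w =
     u i * (v j * w k - v k * w j) - u j * (v i * w k - v k * w i) + u k * (v i * w j - v j * w i)"

definition phi7 :: "(nat \<Rightarrow> real) \<Rightarrow> (nat \<Rightarrow> real) \<Rightarrow> (nat \<Rightarrow> real) \<Rightarrow> real" where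
  "phi7 u v w = dx3 1 2 3 u v w + dx3 1 4 5 u v w + dx3 1 6 7 u v w + dx3 2 4 6 u v w
              - dx3 2 5 7 u v w - dx3 3 4 7 u v w - dx3 3 5 6 u v w"

definition inner7 :: "(nat \<Rightarrow> real) \<Rightarrow> (nat \<Rightarrow> real) \<Rightarrow> real" where
  "inner7 u v = (\<Sum>i=1..7. u i * v i)"

definition vol3 :: "(nat \<Rightarrow> real) \<Rightarrow> (nat \<Rightarrow> real) \<Rightarrow> (nat \<Rightarrow> real) \<Rightarrow> real" where
  "vol3 u v w = (let g = inner7 in sqrt (
     g u u * (g v v * g w w - g v w * g w v) - g u v * (g v u * g w w - g v w * g w u)
     + g u w * (g v u * g w v - g v v * g w u)))"

text \<open>The 3-plane spanned by u,v,w is associative: for one of its two orientations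
  phi restricts to the volume form, i.e. phi(u,v,w) = vol(u,v,w) (orientation of (u,v,w))
  or phi(u,v,w) = - vol(u,v,w) (opposite orientation).\<close>
definition associative_plane :: "(nat \<Rightarrow> real) \<Rightarrow> (nat \<Rightarrow> real) \<Rightarrow> (nat \<Rightarrow> real) \<Rightarrow> bool" where
  "associative_plane u v w \<longleftrightarrow> phi7 u v w = vol3 u v w \<or> phi7 u v w = - vol3 u v w"

definition Tmat :: "real \<Rightarrow> real \<Rightarrow> real \<Rightarrow> real \<Rightarrow> real \<Rightarrow> real \<Rightarrow> real list list" where
  "Tmat al1 al2 al3 a1 a2 a3 =
    [[0, -al1/2, al2/2, al3/2, al1/2, -al2/2, -al3/2],
     [al1, -2*a1, 0, 0, 0, -al3, -al2],
     [al2, 0, -2*a2, 0, al3, 0, al1],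
     [al3, 0, 0, -2*a3, al2, al1, 0],
     [-al1, 0, al3, al2, 2*a1, 0, 0],
     [-al2, -al3, 0, -al1, 0, 2*a2, 0],
     [-al3, -al2, -al1, 0, 0, 0, 2*a3]]"

definition matvec :: "real list list \<Rightarrow> real list \<Rightarrow> real list" where
  "matvec M v = map (\<lambda>row. sum_list (map2 (*) row v)) M"

definition bplus :: "(nat \<Rightarrow> real) \<Rightarrow> real list" where
  "bplus b = [b 1, b 2, 0, b 3, b 4, 0, b 5]"
definition bminus :: "(nat \<Rightarrow> real) \<Rightarrow> real list" where
  "bminus b = [b 1, b 4, 0, b 5, b 2, 0, b 3]"
definition cplus :: "(nat \<Rightarrow> real) \<Rightarrow> real list" where
  "cplus c = [c 1, 0, c 2, c 3, 0, c 4, c 5]"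
definition cminus :: "(nat \<Rightarrow> real) \<Rightarrow> real list" where
  "cminus c = [c 1, 0, c 4, c 5, 0, c 2, c 3]"
definition dplus :: "(nat \<Rightarrow> real) \<Rightarrow> real list" where
  "dplus d = [0, d 1, d 2, d 3, d 4, d 5, d 6]"
definition dminus :: "(nat \<Rightarrow> real) \<Rightarrow> real list" where
  "dminus d = [0, d 4, d 5, d 6, d 1, d 2, d 3]"

definition eit :: "real \<Rightarrow> real \<Rightarrow> complex" where
  "eit s t = exp (\<i> * complex_of_real (s * t))"

definition wf1 :: "real \<Rightarrow> real \<Rightarrow> real \<Rightarrow> complex" where
  "wf1 al1 a1 t = \<i> * complex_of_real al1 * eit a1 t / 2"
definition wf2 :: "real \<Rightarrow> real \<Rightarrow> real \<Rightarrow> complex" where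
  "wf2 al2 a2 t = complex_of_real al2 * eit a2 t / 2"
definition wf3 :: "real \<Rightarrow> real \<Rightarrow> real \<Rightarrow> complex" where
  "wf3 al3 a3 t = complex_of_real al3 * eit a3 t / 2"

definition xf :: "real \<Rightarrow> (nat \<Rightarrow> real) \<Rightarrow> (nat \<Rightarrow> real) \<Rightarrow> complex \<Rightarrow> complex \<Rightarrow> real \<Rightarrow> real" where
  "xf lam b c B C t = 2 * Re ((B * of_real (b 1) + C * of_real (c 1)) * eit (lam/2) t)"

definition pf1 :: "real \<Rightarrow> real \<Rightarrow> (nat \<Rightarrow> real) \<Rightarrow> (nat \<Rightarrow> real) \<Rightarrow> complex \<Rightarrow> complex \<Rightarrow> real \<Rightarrow> complex" where
  "pf1 a1 lam b d B D t = \<i> * eit a1 t *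
     (B * of_real (b 2) * eit (lam/2) t + cnj B * of_real (b 4) * eit (-lam/2) t
      + D * of_real (d 1) * eit (3*lam/2) t + cnj D * of_real (d 4) * eit (-3*lam/2) t)"

definition pf2 :: "real \<Rightarrow> real \<Rightarrow> (nat \<Rightarrow> real) \<Rightarrow> (nat \<Rightarrow> real) \<Rightarrow> complex \<Rightarrow> complex \<Rightarrow> real \<Rightarrow> complex" where
  "pf2 a2 lam c d C D t = eit a2 t *
     (C * of_real (c 2) * eit (lam/2) t + cnj C * of_real (c 4) * eit (-lam/2) t
      + D * of_real (d 2) * eit (3*lam/2) t + cnj D * of_real (d 5) * eit (-3*lam/2) t)"

definition pf3 :: "real \<Rightarrow> real \<Rightarrow> (nat \<Rightarrow> real) \<Rightarrow> (nat \<Rightarrow> real) \<Rightarrow> (nat \<Rightarrow> real) \<Rightarrow> complex \<Rightarrow> complex \<Rightarrow> complex \<Rightarrow> real \<Rightarrow> complex" where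
  "pf3 a3 lam b c d B C D t = eit a3 t *
     ((B * of_real (b 3) + C * of_real (c 3)) * eit (lam/2) t
      + (cnj B * of_real (b 5) + cnj C * of_real (c 5)) * eit (-lam/2) t
      + D * of_real (d 3) * eit (3*lam/2) t + cnj D * of_real (d 6) * eit (-3*lam/2) t)"

end

theory Submission
  imports Defs
begin

lemma eit_vd [derivative_intros]:
  "((\<lambda>t. eit s t) has_vector_derivative (\<i> * of_real s * eit s t)) (at t within S)"
proof -
  have "((\<lambda>z. exp (\<i> * (of_real s * z))) has_field_derivative
        (exp (\<i> * (of_real s * of_real t)) * (\<i> * of_real s))) (at (of_real t))"
    by (auto intro!: derivative_eq_intros)
  from has_vector_derivative_real_field[OF this]
  show ?thesis by (simp add: eit_def mult_ac)
qed

lemma cnj_eit: "cnj (eit s t) = eit (-s) t"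
  unfolding eit_def by (simp add: exp_cnj)

lemma eit_mult: "eit s t * eit s' t = eit (s + s') t"
  unfolding eit_def by (simp add: exp_add[symmetric] algebra_simps)

lemma cnj_eit_mult: "cnj (eit s t) * eit s t = 1"
  unfolding cnj_eit eit_mult by (simp add: eit_def)

lemma of_real_Im: "complex_of_real (Im z) = - \<i> * (z - cnj z) / 2"
  by (simp add: complex_eq_iff)
lemma of_real_Re: "complex_of_real (Re z) = (z + cnj z) / 2"
  by (simp add: complex_eq_iff)

lemma xf_c: "complex_of_real (xf lam b c B C t) =
   (B * of_real (b 1) + C * of_real (c 1)) * eit (lam/2) t + (cnj B * of_real (b 1) + cnj C * of_real (c 1)) * eit (-lam/2) t"
  unfolding xf_def of_real_mult of_real_Re by (simp add: cnj_eit algebra_simps)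

lemma G0:
  fixes al1 al2 al3 a1 a2 a3 lam :: real and b c d :: "nat \<Rightarrow> real" and B C D :: complex
  assumes r: "(-al1) * b 2 + (al3) * b 3 + (al1) * b 4 + (-al3) * b 5 = 2 * (lam) * b 1"
    "(-al1) * b 4 + (al3) * b 5 + (al1) * b 2 + (-al3) * b 3 = 2 * (- lam) * b 1"
    "(al2) * c 2 + (al3) * c 3 + (-al2) * c 4 + (-al3) * c 5 = 2 * (lam) * c 1"
    "(al2) * c 4 + (al3) * c 5 + (-al2) * c 2 + (-al3) * c 3 = 2 * (- lam) * c 1"
    "(-al1) * d 1 + (al2) * d 2 + (al3) * d 3 + (al1) * d 4 + (-al2) * d 5 + (-al3) * d 6 = 0"
    "(-al1) * d 4 + (al2) * d 5 + (al3) * d 6 + (al1) * d 1 + (-al2) * d 2 + (-al3) * d 3 = 0"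
  shows "(xf lam b c B C has_real_derivative
     Im (cnj (wf1 al1 a1 t) * pf1 a1 lam b d B D t - cnj (wf2 al2 a2 t) * pf2 a2 lam c d C D t
         + cnj (pf3 a3 lam b c d B C D t) * wf3 al3 a3 t)) (at t)"
proof -
  have ce: "cnj (eit (lam/2) t) = eit (-lam/2) t" "cnj (eit (-lam/2) t) = eit (lam/2) t"
    "cnj (eit (3*lam/2) t) = eit (-3*lam/2) t" "cnj (eit (-3*lam/2) t) = eit (3*lam/2) t"
    by (simp_all add: cnj_eit)
  have ii: "\<i> * \<i> + 1 = (0::complex)" by simp
  have em: "cnj (eit a1 t) * eit a1 t = 1" "cnj (eit a2 t) * eit a2 t = 1" "cnj (eit a3 t) * eit a3 t = 1"
    by (simp_all add: cnj_eit_mult)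
  note R = r[THEN arg_cong[where f="complex_of_real"], unfolded of_real_add of_real_mult of_real_diff
     of_real_minus of_real_divide of_real_numeral of_real_0]
  define K where "K = B * of_real (b 1) + C * of_real (c 1)"
  have d0: "((\<lambda>s. K * eit (lam/2) s) has_vector_derivative (K * (\<i> * of_real (lam/2) * eit (lam/2) t))) (at t)"
    by (intro has_vector_derivative_mult_right eit_vd)
  have d1: "((\<lambda>s. 2 * Re (K * eit (lam/2) s)) has_vector_derivative (2 * Re (K * (\<i> * of_real (lam/2) * eit (lam/2) t)))) (at t)"
    by (intro has_vector_derivative_mult_right bounded_linear.has_vector_derivative[OF bounded_linear_Re] d0)
  have xfe: "xf lam b c B C = (\<lambda>s. 2 * Re (K * eit (lam/2) s))"
    unfolding xf_def K_def by (rule ext) simp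
  define h where "h = (1/2::complex)"
  have h2: "2 * h - 1 = 0" and dv: "\<And>x::complex. x / 2 = x * h" and hc: "cnj h = h" unfolding h_def by simp_all
  have Z1: "cnj (wf1 al1 a1 t) * pf1 a1 lam b d B D t = of_real al1 / 2 *
     (B * of_real (b 2) * eit (lam/2) t + cnj B * of_real (b 4) * eit (-lam/2) t
      + D * of_real (d 1) * eit (3*lam/2) t + cnj D * of_real (d 4) * eit (-3*lam/2) t)"
    unfolding wf1_def pf1_def complex_cnj_mult complex_cnj_divide complex_cnj_i complex_cnj_complex_of_real complex_cnj_numeral
    using em ii by algebra
  have Z2: "cnj (wf2 al2 a2 t) * pf2 a2 lam c d C D t = of_real al2 / 2 *
     (C * of_real (c 2) * eit (lam/2) t + cnj C * of_real (c 4) * eit (-lam/2) t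
      + D * of_real (d 2) * eit (3*lam/2) t + cnj D * of_real (d 5) * eit (-3*lam/2) t)"
    unfolding wf2_def pf2_def complex_cnj_mult complex_cnj_divide complex_cnj_i complex_cnj_complex_of_real complex_cnj_numeral
    using em ii by algebra
  have Z3: "cnj (pf3 a3 lam b c d B C D t) * wf3 al3 a3 t = of_real al3 / 2 *
     ((cnj B * of_real (b 3) + cnj C * of_real (c 3)) * eit (-lam/2) t
      + (B * of_real (b 5) + C * of_real (c 5)) * eit (lam/2) t
      + cnj D * of_real (d 3) * eit (-3*lam/2) t + D * of_real (d 6) * eit (3*lam/2) t)"
    unfolding wf3_def pf3_def complex_cnj_mult complex_cnj_divide complex_cnj_i complex_cnj_complex_of_real complex_cnj_numeral
      complex_cnj_add ce complex_cnj_cnj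
    using em ii by algebra
  have eq: "2 * Re (K * (\<i> * of_real (lam/2) * eit (lam/2) t)) =
     Im (cnj (wf1 al1 a1 t) * pf1 a1 lam b d B D t - cnj (wf2 al2 a2 t) * pf2 a2 lam c d C D t
         + cnj (pf3 a3 lam b c d B C D t) * wf3 al3 a3 t)"
    unfolding Z1 Z2 Z3
    apply (subst of_real_eq_iff[symmetric, where 'a=complex])
    apply (simp only: of_real_Re of_real_Im of_real_mult K_def
     complex_cnj_add complex_cnj_diff complex_cnj_cnj
     complex_cnj_minus complex_cnj_mult complex_cnj_divide complex_cnj_numeral complex_cnj_complex_of_real
     complex_cnj_i ce of_real_add of_real_diff of_real_minus of_real_divide of_real_numeral)
    apply (simp only: dv hc)
    using R ii h2 by algebra
  show ?thesis
    unfolding has_real_derivative_iff_has_vector_derivative xfe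
    by (rule has_vector_derivative_eq_rhs[OF d1 eq])
qed

lemma G1:
  fixes al1 al2 al3 a1 a2 a3 lam :: real and b c d :: "nat \<Rightarrow> real" and B C D :: complex
  assumes r: "(al1) * b 1 + (-2*a1) * b 2 + (-al2) * b 5 = (lam) * b 2"
     "(al1) * b 1 + (-2*a1) * b 4 + (-al2) * b 3 = (- lam) * b 4"
     "(al1) * c 1 + (-al3) * c 4 + (-al2) * c 5 = 0"
     "(al1) * c 1 + (-al3) * c 2 + (-al2) * c 3 = 0"
     "(-2*a1) * d 1 + (-al3) * d 5 + (-al2) * d 6 = (3 * lam) * d 1"
     "(-2*a1) * d 4 + (-al3) * d 2 + (-al2) * d 3 = (- 3 * lam) * d 4"
    and asum: "a1 + a2 + a3 = 0"
  shows "((\<lambda>s. pf1 a1 lam b d B D s) has_vector_derivative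
          (\<i> * of_real (xf lam b c B C t) * wf1 al1 a1 t
           + cnj (wf2 al2 a2 t * pf3 a3 lam b c d B C D t + pf2 a2 lam c d C D t * wf3 al3 a3 t))) (at t)"
proof -
  have e1: "cnj (eit a2 t) * cnj (eit a3 t) = eit a1 t"
  proof -
    have "- a2 + - a3 = a1" using asum by linarith
    then show ?thesis unfolding cnj_eit eit_mult by simp
  qed
  have ce: "cnj (eit (lam/2) t) = eit (-lam/2) t" "cnj (eit (-lam/2) t) = eit (lam/2) t"
    "cnj (eit (3*lam/2) t) = eit (-3*lam/2) t" "cnj (eit (-3*lam/2) t) = eit (3*lam/2) t"
    by (simp_all add: cnj_eit)
  have ii: "\<i> * \<i> + 1 = (0::complex)" by simp
  note R = r[THEN arg_cong[where f="complex_of_real"], unfolded of_real_add of_real_mult of_real_diff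
     of_real_minus of_real_divide of_real_numeral of_real_0]
  show ?thesis
  unfolding pf1_def
  apply (rule has_vector_derivative_eq_rhs)
   apply (rule derivative_eq_intros refl)+
  apply (simp only: xf_c wf1_def wf2_def wf3_def pf2_def pf3_def complex_cnj_add complex_cnj_diff complex_cnj_cnj
     complex_cnj_minus complex_cnj_mult complex_cnj_divide complex_cnj_numeral complex_cnj_complex_of_real
     complex_cnj_i ce of_real_add of_real_mult of_real_diff of_real_minus of_real_divide of_real_numeral)
  using R e1 ii by algebra
qed
lemma G2:
  fixes al1 al2 al3 a1 a2 a3 lam :: real and b c d :: "nat \<Rightarrow> real" and B C D :: complex
  assumes r: "(al2) * b 1 + (al3) * b 4 + (al1) * b 5 = 0"
    "(al2) * b 1 + (al3) * b 2 + (al1) * b 3 = 0"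
    "(al2) * c 1 + (-2*a2) * c 2 + (al1) * c 5 = (lam) * c 2"
    "(al2) * c 1 + (-2*a2) * c 4 + (al1) * c 3 = (- lam) * c 4"
    "(-2*a2) * d 2 + (al3) * d 4 + (al1) * d 6 = (3 * lam) * d 2"
    "(-2*a2) * d 5 + (al3) * d 1 + (al1) * d 3 = (- 3 * lam) * d 5"
    and asum: "a1 + a2 + a3 = 0"
  shows "((\<lambda>s. pf2 a2 lam c d C D s) has_vector_derivative
          (\<i> * of_real (xf lam b c B C t) * wf2 al2 a2 t
           - cnj (wf1 al1 a1 t * pf3 a3 lam b c d B C D t + pf1 a1 lam b d B D t * wf3 al3 a3 t))) (at t)"
proof -
  have e1: "cnj (eit a1 t) * cnj (eit a3 t) = eit a2 t"
  proof -
    have "- a1 + - a3 = a2" using asum by linarith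
    then show ?thesis unfolding cnj_eit eit_mult by simp
  qed
  have ce: "cnj (eit (lam/2) t) = eit (-lam/2) t" "cnj (eit (-lam/2) t) = eit (lam/2) t"
    "cnj (eit (3*lam/2) t) = eit (-3*lam/2) t" "cnj (eit (-3*lam/2) t) = eit (3*lam/2) t"
    by (simp_all add: cnj_eit)
  have ii: "\<i> * \<i> + 1 = (0::complex)" by simp
  note R = r[THEN arg_cong[where f="complex_of_real"], unfolded of_real_add of_real_mult of_real_diff
     of_real_minus of_real_divide of_real_numeral of_real_0]
  show ?thesis
  unfolding pf2_def
  apply (rule has_vector_derivative_eq_rhs)
   apply (rule derivative_eq_intros refl)+
  apply (simp only: xf_c wf1_def wf2_def wf3_def pf1_def pf2_def pf3_def complex_cnj_add complex_cnj_diff complex_cnj_cnj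
     complex_cnj_minus complex_cnj_mult complex_cnj_divide complex_cnj_numeral complex_cnj_complex_of_real
     complex_cnj_i ce of_real_add of_real_mult of_real_diff of_real_minus of_real_divide of_real_numeral)
  using R e1 ii by algebra
qed
lemma G3:
  fixes al1 al2 al3 a1 a2 a3 lam :: real and b c d :: "nat \<Rightarrow> real" and B C D :: complex
  assumes r: "(al3) * b 1 + (-2*a3) * b 3 + (al2) * b 4 = (lam) * b 3"
    "(al3) * b 1 + (-2*a3) * b 5 + (al2) * b 2 = (- lam) * b 5"
    "(al3) * c 1 + (-2*a3) * c 3 + (al1) * c 4 = (lam) * c 3"
    "(al3) * c 1 + (-2*a3) * c 5 + (al1) * c 2 = (- lam) * c 5"
    "(-2*a3) * d 3 + (al2) * d 4 + (al1) * d 5 = (3 * lam) * d 3"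
    "(-2*a3) * d 6 + (al2) * d 1 + (al1) * d 2 = (- 3 * lam) * d 6"
    and asum: "a1 + a2 + a3 = 0"
  shows "((\<lambda>s. pf3 a3 lam b c d B C D s) has_vector_derivative
          (\<i> * of_real (xf lam b c B C t) * wf3 al3 a3 t
           - cnj (wf1 al1 a1 t * pf2 a2 lam c d C D t + wf2 al2 a2 t * pf1 a1 lam b d B D t))) (at t)"
proof -
  have e1: "cnj (eit a1 t) * cnj (eit a2 t) = eit a3 t"
  proof -
    have "- a1 + - a2 = a3" using asum by linarith
    then show ?thesis unfolding cnj_eit eit_mult by simp
  qed
  have ce: "cnj (eit (lam/2) t) = eit (-lam/2) t" "cnj (eit (-lam/2) t) = eit (lam/2) t"
    "cnj (eit (3*lam/2) t) = eit (-3*lam/2) t" "cnj (eit (-3*lam/2) t) = eit (3*lam/2) t"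
    by (simp_all add: cnj_eit)
  have ii: "\<i> * \<i> + 1 = (0::complex)" by simp
  note R = r[THEN arg_cong[where f="complex_of_real"], unfolded of_real_add of_real_mult of_real_diff
     of_real_minus of_real_divide of_real_numeral of_real_0]
  show ?thesis
  unfolding pf3_def
  apply (rule has_vector_derivative_eq_rhs)
   apply (rule derivative_eq_intros refl)+
  apply (simp only: xf_c wf1_def wf2_def wf3_def pf1_def pf2_def pf3_def complex_cnj_add complex_cnj_diff complex_cnj_cnj
     complex_cnj_minus complex_cnj_mult complex_cnj_divide complex_cnj_numeral complex_cnj_complex_of_real
     complex_cnj_i ce of_real_add of_real_mult of_real_diff of_real_minus of_real_divide of_real_numeral)
  using R e1 ii by algebra
qed
lemma W1d:
  fixes al1 al2 al3 a1 a2 a3 :: real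
  assumes asum: "a1 + a2 + a3 = 0" and arel: "a1 * al1 = - (al2 * al3)"
  shows "((\<lambda>s. wf1 al1 a1 s) has_vector_derivative 2 * cnj (wf2 al2 a2 t * wf3 al3 a3 t)) (at t)"
proof -
  have e1: "cnj (eit a2 t) * cnj (eit a3 t) = eit a1 t"
  proof -
    have "- a2 + - a3 = a1" using asum by linarith
    then show ?thesis unfolding cnj_eit eit_mult by simp
  qed
  have ii: "\<i> * \<i> + 1 = (0::complex)" by simp
  define h where "h = (1/2::complex)"
  have h2: "2 * h - 1 = 0" and dv: "\<And>x::complex. x / 2 = x * h" and hc: "cnj h = h" unfolding h_def by simp_all
  note R = arel[THEN arg_cong[where f="complex_of_real"], unfolded of_real_mult of_real_minus]
  show ?thesis
    unfolding wf1_def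
    apply (rule has_vector_derivative_eq_rhs)
     apply (rule derivative_eq_intros refl)+
    apply (simp only: wf2_def wf3_def complex_cnj_mult complex_cnj_divide complex_cnj_complex_of_real complex_cnj_numeral dv hc)
    using e1[THEN iffD1[OF eq_iff_diff_eq_0]] ii
      h2 R[THEN iffD1[OF eq_iff_diff_eq_0]] by algebra
qed

lemma W2d:
  fixes al1 al2 al3 a1 a2 a3 :: real
  assumes asum: "a1 + a2 + a3 = 0" and arel: "a2 * al2 = al3 * al1"
  shows "((\<lambda>s. wf2 al2 a2 s) has_vector_derivative - 2 * cnj (wf1 al1 a1 t * wf3 al3 a3 t)) (at t)"
proof -
  have e1: "cnj (eit a1 t) * cnj (eit a3 t) = eit a2 t"
  proof -
    have "- a1 + - a3 = a2" using asum by linarith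
    then show ?thesis unfolding cnj_eit eit_mult by simp
  qed
  have ii: "\<i> * \<i> + 1 = (0::complex)" by simp
  define h where "h = (1/2::complex)"
  have h2: "2 * h - 1 = 0" and dv: "\<And>x::complex. x / 2 = x * h" and hc: "cnj h = h" unfolding h_def by simp_all
  note R = arel[THEN arg_cong[where f="complex_of_real"], unfolded of_real_mult of_real_minus]
  show ?thesis
    unfolding wf2_def
    apply (rule has_vector_derivative_eq_rhs)
     apply (rule derivative_eq_intros refl)+
    apply (simp only: wf1_def wf3_def complex_cnj_mult complex_cnj_divide complex_cnj_complex_of_real complex_cnj_numeral complex_cnj_i dv hc)
    using e1[THEN iffD1[OF eq_iff_diff_eq_0]] ii
      h2 R[THEN iffD1[OF eq_iff_diff_eq_0]] by algebra
qed

lemma W3d: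
  fixes al1 al2 al3 a1 a2 a3 :: real
  assumes asum: "a1 + a2 + a3 = 0" and arel: "a3 * al3 = al1 * al2"
  shows "((\<lambda>s. wf3 al3 a3 s) has_vector_derivative - 2 * cnj (wf1 al1 a1 t * wf2 al2 a2 t)) (at t)"
proof -
  have e1: "cnj (eit a1 t) * cnj (eit a2 t) = eit a3 t"
  proof -
    have "- a1 + - a2 = a3" using asum by linarith
    then show ?thesis unfolding cnj_eit eit_mult by simp
  qed
  have ii: "\<i> * \<i> + 1 = (0::complex)" by simp
  define h where "h = (1/2::complex)"
  have h2: "2 * h - 1 = 0" and dv: "\<And>x::complex. x / 2 = x * h" and hc: "cnj h = h" unfolding h_def by simp_all
  note R = arel[THEN arg_cong[where f="complex_of_real"], unfolded of_real_mult of_real_minus]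
  show ?thesis
    unfolding wf3_def
    apply (rule has_vector_derivative_eq_rhs)
     apply (rule derivative_eq_intros refl)+
    apply (simp only: wf1_def wf2_def complex_cnj_mult complex_cnj_divide complex_cnj_complex_of_real complex_cnj_numeral complex_cnj_i dv hc)
    using e1[THEN iffD1[OF eq_iff_diff_eq_0]] ii
      h2 R[THEN iffD1[OF eq_iff_diff_eq_0]] by algebra
qed

definition crossC :: "real \<times> complex \<times> complex \<times> complex \<Rightarrow> real \<times> complex \<times> complex \<times> complex \<Rightarrow> real \<times> complex \<times> complex \<times> complex" where
  "crossC p q = (case p of (s, a1, a2, a3) \<Rightarrow> case q of (s', b1, b2, b3) \<Rightarrow>
     (Im (cnj a1 * b1 + cnj a2 * b2 + cnj a3 * b3),
      \<i> * of_real s * b1 - \<i> * of_real s' * a1 + cnj (a2 * b3 - a3 * b2),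
      \<i> * of_real s * b2 - \<i> * of_real s' * a2 + cnj (a3 * b1 - a1 * b3),
      \<i> * of_real s * b3 - \<i> * of_real s' * a3 + cnj (a1 * b2 - a2 * b1)))"

lemma inner7_expand: "inner7 u v = u 1 * v 1 + u 2 * v 2 + u 3 * v 3 + u 4 * v 4 + u 5 * v 5 + u 6 * v 6 + u 7 * v 7"
  by (simp add: inner7_def numeral_eq_Suc)

lemma inner7_comm: "inner7 u v = inner7 v u"
  by (simp add: inner7_def mult.commute)

lemma assoc_cross: "associative_plane (coords p) (coords q) (coords (crossC p q))"
proof -
  obtain x1 a1 a2 a3 where p: "p = (x1, a1, a2, a3)" by (cases p) auto
  obtain y1 b1 b2 b3 where q: "q = (y1, b1, b2, b3)" by (cases q) auto
  obtain x2 x3 where a1: "a1 = Complex x2 x3" by (cases a1) auto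
  obtain x4 x5 where a2: "a2 = Complex x4 x5" by (cases a2) auto
  obtain x6 x7 where a3: "a3 = Complex x6 x7" by (cases a3) auto
  obtain y2 y3 where b1: "b1 = Complex y2 y3" by (cases b1) auto
  obtain y4 y5 where b2: "b2 = Complex y4 y5" by (cases b2) auto
  obtain y6 y7 where b3: "b3 = Complex y6 y7" by (cases b3) auto
  define u where "u = coords p"
  define v where "v = coords q"
  define W where "W = coords (crossC p q)"
  have uu: "u 1 = x1" "u 2 = x2" "u 3 = x3" "u 4 = x4" "u 5 = x5" "u 6 = x6" "u 7 = x7"
    unfolding u_def p a1 a2 a3 coords_def by simp_all
  have vv: "v 1 = y1" "v 2 = y2" "v 3 = y3" "v 4 = y4" "v 5 = y5" "v 6 = y6" "v 7 = y7"
    unfolding v_def q b1 b2 b3 coords_def by simp_all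
  have WW: "W 1 = x2*y3 - x3*y2 + x4*y5 - x5*y4 + x6*y7 - x7*y6"
     "W 2 = - x1 * y3 + y1 * x3 + x4*y6 - x5*y7 - x6*y4 + x7*y5"
     "W 3 = x1 * y2 - y1 * x2 - x4*y7 - x5*y6 + x6*y5 + x7*y4"
     "W 4 = - x1 * y5 + y1 * x5 + x6*y2 - x7*y3 - x2*y6 + x3*y7"
     "W 5 = x1 * y4 - y1 * x4 - x6*y3 - x7*y2 + x2*y7 + x3*y6"
     "W 6 = - x1 * y7 + y1 * x7 + x2*y4 - x3*y5 - x4*y2 + x5*y3"
     "W 7 = x1 * y6 - y1 * x6 - x2*y5 - x3*y4 + x4*y3 + x5*y2"
    unfolding W_def p q a1 a2 a3 b1 b2 b3 coords_def crossC_def by (simp_all add: algebra_simps)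
  have h1: "inner7 u W = 0" unfolding inner7_expand uu WW by algebra
  have h2: "inner7 v W = 0" unfolding inner7_expand vv WW by algebra
  have h3: "inner7 W W = inner7 u u * inner7 v v - inner7 u v * inner7 u v" unfolding inner7_expand uu vv WW by algebra
  have h4: "phi7 u v W = inner7 W W" unfolding inner7_expand phi7_def dx3_def uu vv WW by algebra
  have nn: "inner7 W W \<ge> 0" unfolding inner7_expand by simp
  have g: "inner7 u u * (inner7 v v * inner7 W W - inner7 v W * inner7 W v)
      - inner7 u v * (inner7 v u * inner7 W W - inner7 v W * inner7 W u)
      + inner7 u W * (inner7 v u * inner7 W v - inner7 v v * inner7 W u) = inner7 W W * inner7 W W"
  proof -
    have "inner7 u u * (inner7 v v * inner7 W W - inner7 v W * inner7 W v)
      - inner7 u v * (inner7 v u * inner7 W W - inner7 v W * inner7 W u)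
      + inner7 u W * (inner7 v u * inner7 W v - inner7 v v * inner7 W u)
      = inner7 u u * (inner7 v v * inner7 W W) - inner7 u v * (inner7 u v * inner7 W W)"
      by (simp add: inner7_comm[of W u] inner7_comm[of W v] inner7_comm[of v u] h1 h2)
    also have "\<dots> = inner7 W W * inner7 W W" unfolding h3 by algebra
    finally show ?thesis .
  qed
  have "vol3 u v W = sqrt (inner7 W W * inner7 W W)"
    unfolding vol3_def Let_def g ..
  also have "\<dots> = inner7 W W" using nn by simp
  finally show ?thesis unfolding associative_plane_def u_def v_def W_def using h4 u_def v_def W_def by simp
qed
lemma cross_main:
  fixes y1 y2 X Y dX dY dz :: real
    and W1 W2 W3 P1 P2 P3 Q1 Q2 Q3 dW1 dW2 dW3 dP1 dP2 dP3 dQ1 dQ2 dQ3 dr1 dr2 dr3 :: complex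
  assumes hX: "dX = Im (cnj W1 * P1 - cnj W2 * P2 + cnj P3 * W3)"
   and hY: "dY = Im (cnj W1 * Q1 - cnj W2 * Q2 + cnj Q3 * W3)"
   and hz: "dz = Im (cnj P1 * Q1 - cnj P2 * Q2 - cnj P3 * Q3)"
   and hP1: "dP1 = \<i> * of_real X * W1 + cnj (W2 * P3 + P2 * W3)"
   and hQ1: "dQ1 = \<i> * of_real Y * W1 + cnj (W2 * Q3 + Q2 * W3)"
   and hP2: "dP2 = \<i> * of_real X * W2 - cnj (W1 * P3 + P1 * W3)"
   and hQ2: "dQ2 = \<i> * of_real Y * W2 - cnj (W1 * Q3 + Q1 * W3)"
   and hP3: "dP3 = \<i> * of_real X * W3 - cnj (W1 * P2 + W2 * P1)"
   and hQ3: "dQ3 = \<i> * of_real Y * W3 - cnj (W1 * Q2 + W2 * Q1)"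
   and hW1: "dW1 = 2 * cnj (W2 * W3)"
   and hW2: "dW2 = - 2 * cnj (W1 * W3)"
   and hW3: "dW3 = - 2 * cnj (W1 * W2)"
   and hr1: "dr1 = \<i> * of_real X * P1 + \<i> * of_real Y * Q1 + cnj (P2 * P3) + cnj (Q2 * Q3)"
   and hr2: "dr2 = \<i> * of_real X * P2 - \<i> * of_real Y * Q2 - cnj (P3 * P1) + cnj (Q3 * Q1)"
   and hr3: "dr3 = \<i> * of_real X * Q3 + \<i> * of_real Y * P3 - cnj (P1 * Q2) - cnj (P2 * Q1)"
  shows "(y1 * dY - y2 * dX + dz,
          of_real ((y1^2 + y2^2) / 2) * dW1 + of_real y1 * dP1 + of_real y2 * dQ1 + dr1,
          of_real ((y1^2 - y2^2) / 2) * dW2 + of_real y1 * dP2 - of_real y2 * dQ2 + dr2,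
          of_real (y1 * y2) * dW3 + of_real y1 * dQ3 + of_real y2 * dP3 + dr3)
       = crossC (Y, of_real y1 * W1 + P1, of_real y1 * W2 + P2, of_real y2 * W3 + Q3)
                (-X, of_real y2 * W1 + Q1, -(of_real y2 * W2) - Q2, of_real y1 * W3 + P3)"
proof -
  have ii: "\<i> * \<i> + 1 = (0::complex)" by simp
  define h where "h = (1/2::complex)"
  have h2: "2 * h - 1 = 0" and dv: "\<And>x::complex. x / 2 = x * h" and hc: "cnj h = h" unfolding h_def by simp_all
  have c0: "y1 * dY - y2 * dX + dz = Im (cnj (of_real y1 * W1 + P1) * (of_real y2 * W1 + Q1)
      + cnj (of_real y1 * W2 + P2) * (-(of_real y2 * W2) - Q2) + cnj (of_real y2 * W3 + Q3) * (of_real y1 * W3 + P3))"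
    apply (subst of_real_eq_iff[symmetric, where 'a=complex])
    apply (simp only: hX hY hz of_real_Im of_real_add of_real_diff of_real_mult complex_cnj_add complex_cnj_diff complex_cnj_cnj
     complex_cnj_minus complex_cnj_mult complex_cnj_complex_of_real dv hc)
    by (simp add: field_simps power2_eq_square)
  have c1: "of_real ((y1^2 + y2^2) / 2) * dW1 + of_real y1 * dP1 + of_real y2 * dQ1 + dr1 =
     \<i> * of_real Y * (of_real y2 * W1 + Q1) - \<i> * of_real (-X) * (of_real y1 * W1 + P1)
      + cnj ((of_real y1 * W2 + P2) * (of_real y1 * W3 + P3) - (of_real y2 * W3 + Q3) * (-(of_real y2 * W2) - Q2))"
    apply (simp only: hW1 hP1 hQ1 hr1 of_real_add of_real_diff of_real_mult of_real_divide of_real_power of_real_minus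
      complex_cnj_add complex_cnj_diff complex_cnj_cnj complex_cnj_minus complex_cnj_mult complex_cnj_complex_of_real of_real_numeral)
    by (simp add: field_simps power2_eq_square)
  have c2: "of_real ((y1^2 - y2^2) / 2) * dW2 + of_real y1 * dP2 - of_real y2 * dQ2 + dr2 =
     \<i> * of_real Y * (-(of_real y2 * W2) - Q2) - \<i> * of_real (-X) * (of_real y1 * W2 + P2)
      + cnj ((of_real y2 * W3 + Q3) * (of_real y2 * W1 + Q1) - (of_real y1 * W1 + P1) * (of_real y1 * W3 + P3))"
    apply (simp only: hW2 hP2 hQ2 hr2 of_real_add of_real_diff of_real_mult of_real_divide of_real_power of_real_minus
      complex_cnj_add complex_cnj_diff complex_cnj_cnj complex_cnj_minus complex_cnj_mult complex_cnj_complex_of_real of_real_numeral)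
    by (simp add: field_simps power2_eq_square)
  have c3: "of_real (y1 * y2) * dW3 + of_real y1 * dQ3 + of_real y2 * dP3 + dr3 =
     \<i> * of_real Y * (of_real y1 * W3 + P3) - \<i> * of_real (-X) * (of_real y2 * W3 + Q3)
      + cnj ((of_real y1 * W1 + P1) * (-(of_real y2 * W2) - Q2) - (of_real y1 * W2 + P2) * (of_real y2 * W1 + Q1))"
    apply (simp only: hW3 hP3 hQ3 hr3 of_real_add of_real_diff of_real_mult of_real_divide of_real_power of_real_minus
      complex_cnj_add complex_cnj_diff complex_cnj_cnj complex_cnj_minus complex_cnj_mult complex_cnj_complex_of_real of_real_numeral)
    by (simp add: field_simps power2_eq_square)
  show ?thesis by (simp only: crossC_def prod.case c0 c1 c2 c3)
qed



theorem theorem5p6: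
  fixes al1 al2 al3 a1 a2 a3 lam :: real
    and b c d :: "nat \<Rightarrow> real"
    and B B' C C' D D' :: complex
    and z :: "real \<Rightarrow> real"
    and r1 r2 r3 :: "real \<Rightarrow> complex"
  assumes pos: "al1 > 0" "al2 > 0" "al3 > 0"
    and alrel: "1 / al1^2 = 1 / al2^2 + 1 / al3^2"
    and a1_def: "a1 = - al2 * al3 / al1"
    and a2_def: "a2 = al3 * al1 / al2"
    and a3_def: "a3 = al1 * al2 / al3"
    and lam_pos: "lam > 0"
    and lam_sq: "lam^2 = a2^2 - a1 * a3"
    and b_nz: "bplus b \<noteq> replicate 7 0" "bminus b \<noteq> replicate 7 0"
    and c_nz: "cplus c \<noteq> replicate 7 0" "cminus c \<noteq> replicate 7 0"
    and d_nz: "dplus d \<noteq> replicate 7 0" "dminus d \<noteq> replicate 7 0"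
    and b_eig: "matvec (Tmat al1 al2 al3 a1 a2 a3) (bplus b) = map (\<lambda>s. lam * s) (bplus b)"
               "matvec (Tmat al1 al2 al3 a1 a2 a3) (bminus b) = map (\<lambda>s. - lam * s) (bminus b)"
    and c_eig: "matvec (Tmat al1 al2 al3 a1 a2 a3) (cplus c) = map (\<lambda>s. lam * s) (cplus c)"
               "matvec (Tmat al1 al2 al3 a1 a2 a3) (cminus c) = map (\<lambda>s. - lam * s) (cminus c)"
    and d_eig: "matvec (Tmat al1 al2 al3 a1 a2 a3) (dplus d) = map (\<lambda>s. 3 * lam * s) (dplus d)"
               "matvec (Tmat al1 al2 al3 a1 a2 a3) (dminus d) = map (\<lambda>s. - 3 * lam * s) (dminus d)"
    and z_deriv: "\<And>t. (z has_real_derivative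
        Im (cnj (pf1 a1 lam b d B D t) * pf1 a1 lam b d B' D' t
          - cnj (pf2 a2 lam c d C D t) * pf2 a2 lam c d C' D' t
          - cnj (pf3 a3 lam b c d B C D t) * pf3 a3 lam b c d B' C' D' t)) (at t)"
    and r1_deriv: "\<And>t. (r1 has_vector_derivative
        (\<i> * of_real (xf lam b c B C t) * pf1 a1 lam b d B D t
         + \<i> * of_real (xf lam b c B' C' t) * pf1 a1 lam b d B' D' t
         + cnj (pf2 a2 lam c d C D t * pf3 a3 lam b c d B C D t)
         + cnj (pf2 a2 lam c d C' D' t * pf3 a3 lam b c d B' C' D' t))) (at t)"
    and r2_deriv: "\<And>t. (r2 has_vector_derivative
        (\<i> * of_real (xf lam b c B C t) * pf2 a2 lam c d C D t
         - \<i> * of_real (xf lam b c B' C' t) * pf2 a2 lam c d C' D' t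
         - cnj (pf3 a3 lam b c d B C D t * pf1 a1 lam b d B D t)
         + cnj (pf3 a3 lam b c d B' C' D' t * pf1 a1 lam b d B' D' t))) (at t)"
    and r3_deriv: "\<And>t. (r3 has_vector_derivative
        (\<i> * of_real (xf lam b c B C t) * pf3 a3 lam b c d B' C' D' t
         + \<i> * of_real (xf lam b c B' C' t) * pf3 a3 lam b c d B C D t
         - cnj (pf1 a1 lam b d B D t * pf2 a2 lam c d C' D' t)
         - cnj (pf2 a2 lam c d C D t * pf1 a1 lam b d B' D' t))) (at t)"
  defines "F \<equiv> (\<lambda>y1 y2 t. (
        y1 * xf lam b c B' C' t - y2 * xf lam b c B C t + z t,
        of_real ((y1^2 + y2^2) / 2) * wf1 al1 a1 t + of_real y1 * pf1 a1 lam b d B D t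
          + of_real y2 * pf1 a1 lam b d B' D' t + r1 t,
        of_real ((y1^2 - y2^2) / 2) * wf2 al2 a2 t + of_real y1 * pf2 a2 lam c d C D t
          - of_real y2 * pf2 a2 lam c d C' D' t + r2 t,
        of_real (y1 * y2) * wf3 al3 a3 t + of_real y1 * pf3 a3 lam b c d B' C' D' t
          + of_real y2 * pf3 a3 lam b c d B C D t + r3 t)
      :: real \<times> complex \<times> complex \<times> complex)"
  shows "\<forall>y1 y2 t u v w.
     ((\<lambda>s. F s y2 t) has_vector_derivative u) (at y1) \<and>
     ((\<lambda>s. F y1 s t) has_vector_derivative v) (at y2) \<and>
     ((\<lambda>s. F y1 y2 s) has_vector_derivative w) (at t) \<and>
     \<not> dependent {u, v, w} \<and> card {u, v, w} = 3
     \<longrightarrow> associative_plane (coords u) (coords v) (coords w)"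
  proof (intro allI impI)
  fix y1 y2 t u v w
  assume H: "((\<lambda>s. F s y2 t) has_vector_derivative u) (at y1) \<and>
     ((\<lambda>s. F y1 s t) has_vector_derivative v) (at y2) \<and>
     ((\<lambda>s. F y1 y2 s) has_vector_derivative w) (at t) \<and>
     \<not> dependent {u, v, w} \<and> card {u, v, w} = 3"
  have du: "((\<lambda>s. F s y2 t) has_vector_derivative u) (at y1)" using H by blast
  have dv: "((\<lambda>s. F y1 s t) has_vector_derivative v) (at y2)" using H by blast
  have dw: "((\<lambda>s. F y1 y2 s) has_vector_derivative w) (at t)" using H by blast
  have al0: "al1 \<noteq> 0" "al2 \<noteq> 0" "al3 \<noteq> 0" using pos by auto
  have key: "al2^2 * al3^2 = al1^2 * al2^2 + al1^2 * al3^2"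
    using alrel al0 by (simp add: field_simps)
  have asum: "a1 + a2 + a3 = 0"
  proof -
    have "(a1 + a2 + a3) * (al1 * al2 * al3) = - (al2^2 * al3^2) + al1^2 * al3^2 + al1^2 * al2^2"
      unfolding a1_def a2_def a3_def using al0 by (simp add: field_simps power2_eq_square)
    then have "(a1 + a2 + a3) * (al1 * al2 * al3) = 0" using key by simp
    then show ?thesis using al0 by simp
  qed
  have ar1: "a1 * al1 = - (al2 * al3)" unfolding a1_def using al0 by simp
  have ar2: "a2 * al2 = al3 * al1" unfolding a2_def using al0 by simp
  have ar3: "a3 * al3 = al1 * al2" unfolding a3_def using al0 by simp
  note BP = b_eig(1)[unfolded Tmat_def matvec_def bplus_def, simplified, unfolded One_nat_def[symmetric]]
  note BM = b_eig(2)[unfolded Tmat_def matvec_def bminus_def, simplified, unfolded One_nat_def[symmetric]]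
  note CP = c_eig(1)[unfolded Tmat_def matvec_def cplus_def, simplified, unfolded One_nat_def[symmetric]]
  note CM = c_eig(2)[unfolded Tmat_def matvec_def cminus_def, simplified, unfolded One_nat_def[symmetric]]
  note DP = d_eig(1)[unfolded Tmat_def matvec_def dplus_def, simplified, unfolded One_nat_def[symmetric]]
  note DM = d_eig(2)[unfolded Tmat_def matvec_def dminus_def, simplified, unfolded One_nat_def[symmetric]]
  have R0_0: "(-al1) * b 2 + (al3) * b 3 + (al1) * b 4 + (-al3) * b 5 = 2 * (lam) * b 1" using BP BM CP CM DP DM by linarith
  have R0_1: "(-al1) * b 4 + (al3) * b 5 + (al1) * b 2 + (-al3) * b 3 = 2 * (- lam) * b 1" using BP BM CP CM DP DM by linarith
  have R0_2: "(al2) * c 2 + (al3) * c 3 + (-al2) * c 4 + (-al3) * c 5 = 2 * (lam) * c 1" using BP BM CP CM DP DM by linarith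
  have R0_3: "(al2) * c 4 + (al3) * c 5 + (-al2) * c 2 + (-al3) * c 3 = 2 * (- lam) * c 1" using BP BM CP CM DP DM by linarith
  have R0_4: "(-al1) * d 1 + (al2) * d 2 + (al3) * d 3 + (al1) * d 4 + (-al2) * d 5 + (-al3) * d 6 = 0" using BP BM CP CM DP DM by linarith
  have R0_5: "(-al1) * d 4 + (al2) * d 5 + (al3) * d 6 + (al1) * d 1 + (-al2) * d 2 + (-al3) * d 3 = 0" using BP BM CP CM DP DM by linarith
  note R0 = R0_0 R0_1 R0_2 R0_3 R0_4 R0_5
  have R1_0: "(al1) * b 1 + (-2*a1) * b 2 + (-al2) * b 5 = (lam) * b 2" using BP BM CP CM DP DM by linarith
  have R1_1: "(al1) * b 1 + (-2*a1) * b 4 + (-al2) * b 3 = (- lam) * b 4" using BP BM CP CM DP DM by linarith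
  have R1_2: "(al1) * c 1 + (-al3) * c 4 + (-al2) * c 5 = 0" using BP BM CP CM DP DM by linarith
  have R1_3: "(al1) * c 1 + (-al3) * c 2 + (-al2) * c 3 = 0" using BP BM CP CM DP DM by linarith
  have R1_4: "(-2*a1) * d 1 + (-al3) * d 5 + (-al2) * d 6 = (3 * lam) * d 1" using BP BM CP CM DP DM by linarith
  have R1_5: "(-2*a1) * d 4 + (-al3) * d 2 + (-al2) * d 3 = (- 3 * lam) * d 4" using BP BM CP CM DP DM by linarith
  note R1 = R1_0 R1_1 R1_2 R1_3 R1_4 R1_5
  have R2_0: "(al2) * b 1 + (al3) * b 4 + (al1) * b 5 = 0" using BP BM CP CM DP DM by linarith
  have R2_1: "(al2) * b 1 + (al3) * b 2 + (al1) * b 3 = 0" using BP BM CP CM DP DM by linarith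
  have R2_2: "(al2) * c 1 + (-2*a2) * c 2 + (al1) * c 5 = (lam) * c 2" using BP BM CP CM DP DM by linarith
  have R2_3: "(al2) * c 1 + (-2*a2) * c 4 + (al1) * c 3 = (- lam) * c 4" using BP BM CP CM DP DM by linarith
  have R2_4: "(-2*a2) * d 2 + (al3) * d 4 + (al1) * d 6 = (3 * lam) * d 2" using BP BM CP CM DP DM by linarith
  have R2_5: "(-2*a2) * d 5 + (al3) * d 1 + (al1) * d 3 = (- 3 * lam) * d 5" using BP BM CP CM DP DM by linarith
  note R2 = R2_0 R2_1 R2_2 R2_3 R2_4 R2_5
  have R3_0: "(al3) * b 1 + (-2*a3) * b 3 + (al2) * b 4 = (lam) * b 3" using BP BM CP CM DP DM by linarith
  have R3_1: "(al3) * b 1 + (-2*a3) * b 5 + (al2) * b 2 = (- lam) * b 5" using BP BM CP CM DP DM by linarith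
  have R3_2: "(al3) * c 1 + (-2*a3) * c 3 + (al1) * c 4 = (lam) * c 3" using BP BM CP CM DP DM by linarith
  have R3_3: "(al3) * c 1 + (-2*a3) * c 5 + (al1) * c 2 = (- lam) * c 5" using BP BM CP CM DP DM by linarith
  have R3_4: "(-2*a3) * d 3 + (al2) * d 4 + (al1) * d 5 = (3 * lam) * d 3" using BP BM CP CM DP DM by linarith
  have R3_5: "(-2*a3) * d 6 + (al2) * d 1 + (al1) * d 2 = (- 3 * lam) * d 6" using BP BM CP CM DP DM by linarith
  note R3 = R3_0 R3_1 R3_2 R3_3 R3_4 R3_5

  note g0 = G0[OF R0] and g1 = G1[OF R1 asum] and g2 = G2[OF R2 asum] and g3 = G3[OF R3 asum]
  note w1 = W1d[OF asum ar1] and w2 = W2d[OF asum ar2] and w3 = W3d[OF asum ar3]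
  define X where "X = xf lam b c B C t"
  define Y where "Y = xf lam b c B' C' t"
  define P1 where "P1 = pf1 a1 lam b d B D t"
  define Q1 where "Q1 = pf1 a1 lam b d B' D' t"
  define P2 where "P2 = pf2 a2 lam c d C D t"
  define Q2 where "Q2 = pf2 a2 lam c d C' D' t"
  define P3 where "P3 = pf3 a3 lam b c d B C D t"
  define Q3 where "Q3 = pf3 a3 lam b c d B' C' D' t"
  define W1 where "W1 = wf1 al1 a1 t"
  define W2 where "W2 = wf2 al2 a2 t"
  define W3 where "W3 = wf3 al3 a3 t"
  define dX where "dX = Im (cnj W1 * P1 - cnj W2 * P2 + cnj P3 * W3)"
  define dY where "dY = Im (cnj W1 * Q1 - cnj W2 * Q2 + cnj Q3 * W3)"
  define dz where "dz = Im (cnj P1 * Q1 - cnj P2 * Q2 - cnj P3 * Q3)"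
  define dP1 where "dP1 = \<i> * of_real X * W1 + cnj (W2 * P3 + P2 * W3)"
  define dQ1 where "dQ1 = \<i> * of_real Y * W1 + cnj (W2 * Q3 + Q2 * W3)"
  define dP2 where "dP2 = \<i> * of_real X * W2 - cnj (W1 * P3 + P1 * W3)"
  define dQ2 where "dQ2 = \<i> * of_real Y * W2 - cnj (W1 * Q3 + Q1 * W3)"
  define dP3 where "dP3 = \<i> * of_real X * W3 - cnj (W1 * P2 + W2 * P1)"
  define dQ3 where "dQ3 = \<i> * of_real Y * W3 - cnj (W1 * Q2 + W2 * Q1)"
  define dW1 where "dW1 = 2 * cnj (W2 * W3)"
  define dW2 where "dW2 = - 2 * cnj (W1 * W3)"
  define dW3 where "dW3 = - 2 * cnj (W1 * W2)"
  define dr1 where "dr1 = \<i> * of_real X * P1 + \<i> * of_real Y * Q1 + cnj (P2 * P3) + cnj (Q2 * Q3)"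
  define dr2 where "dr2 = \<i> * of_real X * P2 - \<i> * of_real Y * Q2 - cnj (P3 * P1) + cnj (Q3 * Q1)"
  define dr3 where "dr3 = \<i> * of_real X * Q3 + \<i> * of_real Y * P3 - cnj (P1 * Q2) - cnj (P2 * Q1)"
  note defs = X_def Y_def P1_def Q1_def P2_def Q2_def P3_def Q3_def W1_def W2_def W3_def
  have fX: "(xf lam b c B C has_vector_derivative dX) (at t)"
    using g0[where B=B and C=C and D=D and t=t]
    unfolding dX_def defs has_real_derivative_iff_has_vector_derivative .
  have fY: "(xf lam b c B' C' has_vector_derivative dY) (at t)"
    using g0[where B=B' and C=C' and D=D' and t=t]
    unfolding dY_def defs has_real_derivative_iff_has_vector_derivative .
  have fz: "(z has_vector_derivative dz) (at t)"
    using z_deriv[of t] unfolding dz_def defs has_real_derivative_iff_has_vector_derivative .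
  have fP1: "((\<lambda>s. pf1 a1 lam b d B D s) has_vector_derivative dP1) (at t)"
    using g1[where B=B and C=C and D=D and t=t] unfolding dP1_def defs .
  have fQ1: "((\<lambda>s. pf1 a1 lam b d B' D' s) has_vector_derivative dQ1) (at t)"
    using g1[where B=B' and C=C' and D=D' and t=t] unfolding dQ1_def defs .
  have fP2: "((\<lambda>s. pf2 a2 lam c d C D s) has_vector_derivative dP2) (at t)"
    using g2[where B=B and C=C and D=D and t=t] unfolding dP2_def defs .
  have fQ2: "((\<lambda>s. pf2 a2 lam c d C' D' s) has_vector_derivative dQ2) (at t)"
    using g2[where B=B' and C=C' and D=D' and t=t] unfolding dQ2_def defs .
  have fP3: "((\<lambda>s. pf3 a3 lam b c d B C D s) has_vector_derivative dP3) (at t)"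
    using g3[where B=B and C=C and D=D and t=t] unfolding dP3_def defs .
  have fQ3: "((\<lambda>s. pf3 a3 lam b c d B' C' D' s) has_vector_derivative dQ3) (at t)"
    using g3[where B=B' and C=C' and D=D' and t=t] unfolding dQ3_def defs .
  have fW1: "((\<lambda>s. wf1 al1 a1 s) has_vector_derivative dW1) (at t)"
    using w1[where t=t] unfolding dW1_def defs .
  have fW2: "((\<lambda>s. wf2 al2 a2 s) has_vector_derivative dW2) (at t)"
    using w2[where t=t] unfolding dW2_def defs .
  have fW3: "((\<lambda>s. wf3 al3 a3 s) has_vector_derivative dW3) (at t)"
    using w3[where t=t] unfolding dW3_def defs .
  have fr1: "(r1 has_vector_derivative dr1) (at t)"
    using r1_deriv[of t] unfolding dr1_def defs .
  have fr2: "(r2 has_vector_derivative dr2) (at t)"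
    using r2_deriv[of t] unfolding dr2_def defs .
  have fr3: "(r3 has_vector_derivative dr3) (at t)"
    using r3_deriv[of t] unfolding dr3_def defs .
  have dFt: "((\<lambda>s. F y1 y2 s) has_vector_derivative
     (y1 * dY - y2 * dX + dz,
      of_real ((y1^2 + y2^2) / 2) * dW1 + of_real y1 * dP1 + of_real y2 * dQ1 + dr1,
      of_real ((y1^2 - y2^2) / 2) * dW2 + of_real y1 * dP2 - of_real y2 * dQ2 + dr2,
      of_real (y1 * y2) * dW3 + of_real y1 * dQ3 + of_real y2 * dP3 + dr3)) (at t)"
    unfolding F_def
    by (intro has_vector_derivative_Pair has_vector_derivative_add has_vector_derivative_diff
        has_vector_derivative_mult_right fX fY fz fP1 fQ1 fP2 fQ2 fP3 fQ3 fW1 fW2 fW3 fr1 fr2 fr3)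
  have dFy1: "((\<lambda>s. F s y2 t) has_vector_derivative
     (Y, of_real y1 * W1 + P1, of_real y1 * W2 + P2, of_real y2 * W3 + Q3)) (at y1)"
    unfolding F_def defs
    apply (intro has_vector_derivative_Pair)
       apply (auto intro!: derivative_eq_intros simp: power2_eq_square)
    done
  have dFy2: "((\<lambda>s. F y1 s t) has_vector_derivative
     (-X, of_real y2 * W1 + Q1, -(of_real y2 * W2) - Q2, of_real y1 * W3 + P3)) (at y2)"
    unfolding F_def defs
    apply (intro has_vector_derivative_Pair)
       apply (auto intro!: derivative_eq_intros simp: power2_eq_square)
    done
  have uU: "u = (Y, of_real y1 * W1 + P1, of_real y1 * W2 + P2, of_real y2 * W3 + Q3)"
    using vector_derivative_unique_at[OF du dFy1] .
  have vV: "v = (-X, of_real y2 * W1 + Q1, -(of_real y2 * W2) - Q2, of_real y1 * W3 + P3)"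
    using vector_derivative_unique_at[OF dv dFy2] .
  have wW: "w = (y1 * dY - y2 * dX + dz,
      of_real ((y1^2 + y2^2) / 2) * dW1 + of_real y1 * dP1 + of_real y2 * dQ1 + dr1,
      of_real ((y1^2 - y2^2) / 2) * dW2 + of_real y1 * dP2 - of_real y2 * dQ2 + dr2,
      of_real (y1 * y2) * dW3 + of_real y1 * dQ3 + of_real y2 * dP3 + dr3)"
    using vector_derivative_unique_at[OF dw dFt] .
  have "w = crossC u v"
    unfolding wW uU vV
    by (rule cross_main[OF dX_def dY_def dz_def dP1_def dQ1_def dP2_def dQ2_def
        dP3_def dQ3_def dW1_def dW2_def dW3_def dr1_def dr2_def dr3_def])
  then show "associative_plane (coords u) (coords v) (coords w)"
    using assoc_cross by simp
qed

end
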